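(* Let $f\colon\mathcal P_0\to\mathcal P_1$ and $g\colon\mathcal P_1\to\mathcal P_2$ be morphisms of models for manifolds with corners. Then for every object $p$ of $\mathcal P_0$ there is a natural bijection $$Q_{g\circ f}(p)\;\cong\;Q_f(p)\,\amalg\,Q_g(f(p)).$$
   Context: A category $\mathcal P$ equipped with a functor $\operatorname{codim}\colon \mathcal P\to\mathbb N$ is a \emph{model for manifolds with corners} if for every object $p$ the overcategory $\mathcal P^p$ (arrows with target $p$) is isomorphic to the power set of $\{1,\dots,\operatorname{codim} p\}$ ordered by inclusion. Write $Q_{\mathcal P}(p)$ for the set of minimal elements of $\mathcal P^p$ other than its initial object. A \emph{morphism of models} $f\colon\mathcal P_0\to\mathcal P_1$ is a functor which is an embedding (injective on objects and arrows), preserves codimension up to an overall constant shift, and, for every arrow $\alpha$ of $\mathcal P_0$, induces a bijection between factorisations of $\alpha$ in $\mathcal P_0$ and factorisations of $f(\alpha)$ in $\mathcal P_1$. For an object $p$ of $\mathcal P_0$, let $p_0$ be the unique minimal element of $\mathcal P_0$ admitting an arrow to $p$ (the source of the initial object of $\mathcal P_0^p$), and define $Q_f(p)=Q_{\mathcal P_1}(f(p_0))$. *)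

theory Defs
  imports Main
begin

record ('o, 'a) cat =
  Obj  :: "'o set"
  Arr  :: "'a set"
  Dom  :: "'a \<Rightarrow> 'o"
  Cod  :: "'a \<Rightarrow> 'o"
  Id   :: "'o \<Rightarrow> 'a"
  Comp :: "'a \<Rightarrow> 'a \<Rightarrow> 'a"   (* Comp C g f = g \<circ> f, defined when Cod f = Dom g *)

definition category :: "('o, 'a) cat \<Rightarrow> bool" where
  "category C \<longleftrightarrow>
     (\<forall>f\<in>Arr C. Dom C f \<in> Obj C \<and> Cod C f \<in> Obj C) \<and>
     (\<forall>x\<in>Obj C. Id C x \<in> Arr C \<and> Dom C (Id C x) = x \<and> Cod C (Id C x) = x) \<and>
     (\<forall>f\<in>Arr C. \<forall>g\<in>Arr C. Cod C f = Dom C g \<longrightarrow>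
        Comp C g f \<in> Arr C \<and> Dom C (Comp C g f) = Dom C f \<and> Cod C (Comp C g f) = Cod C g) \<and>
     (\<forall>f\<in>Arr C. Comp C (Id C (Cod C f)) f = f \<and> Comp C f (Id C (Dom C f)) = f) \<and>
     (\<forall>f\<in>Arr C. \<forall>g\<in>Arr C. \<forall>h\<in>Arr C. Cod C f = Dom C g \<longrightarrow> Cod C g = Dom C h \<longrightarrow>
        Comp C h (Comp C g f) = Comp C (Comp C h g) f)"

definition over :: "('o, 'a) cat \<Rightarrow> 'o \<Rightarrow> 'a set" where
  "over C p = {a \<in> Arr C. Cod C a = p}"

definition over_hom :: "('o, 'a) cat \<Rightarrow> 'a \<Rightarrow> 'a \<Rightarrow> 'a set" where
  "over_hom C a b = {c \<in> Arr C. Dom C c = Dom C a \<and> Cod C c = Dom C b \<and> Comp C b c = a}"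

definition le_over :: "('o, 'a) cat \<Rightarrow> 'a \<Rightarrow> 'a \<Rightarrow> bool" where
  "le_over C a b \<longleftrightarrow> over_hom C a b \<noteq> {}"

text \<open>Model for manifolds with corners: for each object p, the overcategory C^p is
  isomorphic (as a category) to the poset Pow {1..codim p} under inclusion, i.e. there is a
  bijection on objects, hom sets have exactly one element when the images are included and
  are empty otherwise. codim is a functor to (nat, \<le>); this is in fact forced by the
  isomorphism condition.\<close>

definition model :: "('o, 'a) cat \<Rightarrow> ('o \<Rightarrow> nat) \<Rightarrow> bool" where
  "model C codim \<longleftrightarrow> category C \<and>
     (\<forall>f\<in>Arr C. codim (Dom C f) \<le> codim (Cod C f)) \<and>
     (\<forall>p\<in>Obj C. \<exists>\<phi>. bij_betw \<phi> (over C p) (Pow {1..codim p}) \<and>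
        (\<forall>a\<in>over C p. \<forall>b\<in>over C p.
           (over_hom C a b \<noteq> {} \<longleftrightarrow> \<phi> a \<subseteq> \<phi> b) \<and>
           (\<forall>x\<in>over_hom C a b. \<forall>y\<in>over_hom C a b. x = y)))"

definition is_initial :: "('o, 'a) cat \<Rightarrow> 'o \<Rightarrow> 'a \<Rightarrow> bool" where
  "is_initial C p a \<longleftrightarrow> a \<in> over C p \<and> (\<forall>b\<in>over C p. \<exists>!c. c \<in> over_hom C a b)"

definition init_arr :: "('o, 'a) cat \<Rightarrow> 'o \<Rightarrow> 'a" where
  "init_arr C p = (THE a. is_initial C p a)"

definition base :: "('o, 'a) cat \<Rightarrow> 'o \<Rightarrow> 'o" where
  "base C p = Dom C (init_arr C p)"

definition Q :: "('o, 'a) cat \<Rightarrow> 'o \<Rightarrow> 'a set" where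
  "Q C p = {a \<in> over C p. \<not> is_initial C p a \<and>
             (\<forall>b\<in>over C p. \<not> is_initial C p b \<longrightarrow> le_over C b a \<longrightarrow> b = a)}"

definition factorizations :: "('o, 'a) cat \<Rightarrow> 'a \<Rightarrow> ('a \<times> 'a) set" where
  "factorizations C f = {(g, h). g \<in> Arr C \<and> h \<in> Arr C \<and> Dom C g = Cod C h \<and> Comp C g h = f}"

definition is_functor :: "('o, 'a) cat \<Rightarrow> ('p, 'b) cat \<Rightarrow> ('o \<Rightarrow> 'p) \<Rightarrow> ('a \<Rightarrow> 'b) \<Rightarrow> bool" where
  "is_functor C D F A \<longleftrightarrow>
     F ` Obj C \<subseteq> Obj D \<and> A ` Arr C \<subseteq> Arr D \<and>
     (\<forall>f\<in>Arr C. Dom D (A f) = F (Dom C f) \<and> Cod D (A f) = F (Cod C f)) \<and>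
     (\<forall>x\<in>Obj C. A (Id C x) = Id D (F x)) \<and>
     (\<forall>f\<in>Arr C. \<forall>g\<in>Arr C. Cod C f = Dom C g \<longrightarrow> A (Comp C g f) = Comp D (A g) (A f))"

definition model_morphism ::
  "('o, 'a) cat \<Rightarrow> ('o \<Rightarrow> nat) \<Rightarrow> ('p, 'b) cat \<Rightarrow> ('p \<Rightarrow> nat) \<Rightarrow> ('o \<Rightarrow> 'p) \<Rightarrow> ('a \<Rightarrow> 'b) \<Rightarrow> bool" where
  "model_morphism C c D d F A \<longleftrightarrow>
     model C c \<and> model D d \<and> is_functor C D F A \<and>
     inj_on F (Obj C) \<and> inj_on A (Arr C) \<and>
     (\<exists>k::int. \<forall>p\<in>Obj C. int (d (F p)) = int (c p) + k) \<and>
     (\<forall>f\<in>Arr C. bij_betw (\<lambda>(g, h). (A g, A h)) (factorizations C f) (factorizations D (A f)))"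

text \<open>Q_f(p) = Q_{P_1}(f(p_0)); only the object part of f is needed.\<close>
definition Q_mor :: "('o, 'a) cat \<Rightarrow> ('p, 'b) cat \<Rightarrow> ('o \<Rightarrow> 'p) \<Rightarrow> 'o \<Rightarrow> 'b set" where
  "Q_mor C D F p = Q D (F (base C p))"

end

theory Submission imports Defs begin

definition good :: "('o, 'a) cat \<Rightarrow> ('o \<Rightarrow> nat) \<Rightarrow> 'o \<Rightarrow> ('a \<Rightarrow> nat set) \<Rightarrow> bool" where
  "good C c p \<phi> \<longleftrightarrow> bij_betw \<phi> (over C p) (Pow {1..c p}) \<and>
     (\<forall>a\<in>over C p. \<forall>b\<in>over C p. le_over C a b \<longleftrightarrow> \<phi> a \<subseteq> \<phi> b)"

lemma good_ex: assumes "model C c" "p \<in> Obj C" shows "\<exists>\<phi>. good C c p \<phi>"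
proof -
  have "\<exists>\<phi>. bij_betw \<phi> (over C p) (Pow {1..c p}) \<and>
        (\<forall>a\<in>over C p. \<forall>b\<in>over C p.
           (over_hom C a b \<noteq> {} \<longleftrightarrow> \<phi> a \<subseteq> \<phi> b) \<and>
           (\<forall>x\<in>over_hom C a b. \<forall>y\<in>over_hom C a b. x = y))"
    using assms unfolding model_def by blast
  then obtain \<phi> where "bij_betw \<phi> (over C p) (Pow {1..c p})"
    "\<forall>a\<in>over C p. \<forall>b\<in>over C p. (over_hom C a b \<noteq> {} \<longleftrightarrow> \<phi> a \<subseteq> \<phi> b)" by blast
  then have "good C c p \<phi>" unfolding good_def le_over_def by blast
  then show ?thesis by blast
qed

lemma uniq: assumes "model C c" "p \<in> Obj C" "a \<in> over C p" "b \<in> over C p"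
  "x \<in> over_hom C a b" "y \<in> over_hom C a b" shows "x = y"
proof -
  have "\<forall>a\<in>over C p. \<forall>b\<in>over C p. (\<forall>x\<in>over_hom C a b. \<forall>y\<in>over_hom C a b. x = y)"
    using assms(1,2) unfolding model_def by blast
  then show ?thesis using assms(3-) by blast
qed

lemma cat: assumes "model C c" shows "category C" using assms model_def by blast

lemma functorD: assumes "is_functor C D F A" "f \<in> Arr C"
  shows "A f \<in> Arr D" "Dom D (A f) = F (Dom C f)" "Cod D (A f) = F (Cod C f)"
  using assms unfolding is_functor_def by blast+

lemma functor_comp: assumes "is_functor C D F A" "f \<in> Arr C" "g \<in> Arr C" "Cod C f = Dom C g"
  shows "A (Comp C g f) = Comp D (A g) (A f)"
  using assms unfolding is_functor_def by blast

lemma functor_obj: assumes "is_functor C D F A" "x \<in> Obj C" shows "F x \<in> Obj D"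
  using assms unfolding is_functor_def by blast

lemma dom_obj: assumes "model C c" "f \<in> Arr C" shows "Dom C f \<in> Obj C" "Cod C f \<in> Obj C"
  using cat[OF assms(1)] assms(2) unfolding category_def by blast+


lemma over_comp: assumes "model C c" "a \<in> over C p" "e \<in> Arr C" "Cod C e = Dom C a"
  shows "Comp C a e \<in> over C p" "Dom C (Comp C a e) = Dom C e"
  using cat[OF assms(1)] assms(2-) unfolding category_def over_def by auto

lemma good_le: "good C c p \<phi> \<Longrightarrow> a \<in> over C p \<Longrightarrow> b \<in> over C p \<Longrightarrow> le_over C a b \<longleftrightarrow> \<phi> a \<subseteq> \<phi> b"
  unfolding good_def by blast

lemma good_in: "good C c p \<phi> \<Longrightarrow> a \<in> over C p \<Longrightarrow> \<phi> a \<subseteq> {1..c p}"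
  unfolding good_def bij_betw_def by auto

lemma good_inj: "good C c p \<phi> \<Longrightarrow> a \<in> over C p \<Longrightarrow> b \<in> over C p \<Longrightarrow> \<phi> a = \<phi> b \<Longrightarrow> a = b"
  unfolding good_def bij_betw_def inj_on_def by auto

lemma good_surj: assumes "good C c p \<phi>" "S \<subseteq> {1..c p}" obtains a where "a \<in> over C p" "\<phi> a = S"
proof -
  have "S \<in> \<phi> ` over C p" using assms unfolding good_def bij_betw_def by auto
  then show ?thesis using that by blast
qed

lemma initial_iff: assumes "model C c" "p \<in> Obj C" "good C c p \<phi>"
  shows "is_initial C p a \<longleftrightarrow> a \<in> over C p \<and> \<phi> a = {}"
proof
  assume i: "is_initial C p a"
  obtain b where b: "b \<in> over C p" "\<phi> b = {}" using good_surj[OF assms(3), of "{}"] by blast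
  have a: "a \<in> over C p" using i unfolding is_initial_def by blast
  from i b(1) have "\<exists>!x. x \<in> over_hom C a b" unfolding is_initial_def by blast
  then have "le_over C a b" unfolding le_over_def by blast
  then have "\<phi> a \<subseteq> \<phi> b" using good_le[OF assms(3) a b(1)] by blast
  then show "a \<in> over C p \<and> \<phi> a = {}" using a b(2) by blast
next
  assume a: "a \<in> over C p \<and> \<phi> a = {}"
  show "is_initial C p a" unfolding is_initial_def
  proof (intro conjI ballI)
    show "a \<in> over C p" using a by auto
    fix b assume b: "b \<in> over C p"
    have "le_over C a b" using good_le[OF assms(3) _ b] a by auto
    then obtain x where "x \<in> over_hom C a b" unfolding le_over_def by auto
    moreover have "a \<in> over C p" using a by blast
    ultimately show "\<exists>!x. x \<in> over_hom C a b" using uniq[OF assms(1,2) _ b, of a] by (intro ex1I) auto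
  qed
qed

lemma init_arr: assumes "model C c" "p \<in> Obj C" "good C c p \<phi>"
  shows "init_arr C p \<in> over C p" "\<phi> (init_arr C p) = {}"
proof -
  obtain b where b: "b \<in> over C p" "\<phi> b = {}" using good_surj[OF assms(3), of "{}"] by blast
  have "init_arr C p = b" unfolding init_arr_def
  proof (rule the_equality)
    show "is_initial C p b" using initial_iff[OF assms] b by auto
    fix a assume "is_initial C p a" then show "a = b"
      using initial_iff[OF assms] b good_inj[OF assms(3)] by metis
  qed
  then show "init_arr C p \<in> over C p" "\<phi> (init_arr C p) = {}" using b by auto
qed

lemma Q_char: assumes "model C c" "p \<in> Obj C" "good C c p \<phi>"
  shows "Q C p = {a \<in> over C p. card (\<phi> a) = 1}"
proof (intro set_eqI iffI)
  fix a assume aQ: "a \<in> Q C p"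
  have a: "a \<in> over C p" using aQ unfolding Q_def by blast
  have ni: "\<not> is_initial C p a" using aQ unfolding Q_def by blast
  have m: "\<And>b. b \<in> over C p \<Longrightarrow> \<not> is_initial C p b \<Longrightarrow> le_over C b a \<Longrightarrow> b = a"
    using aQ unfolding Q_def by blast
  have ne: "\<phi> a \<noteq> {}" using ni initial_iff[OF assms, of a] a by blast
  obtain t where t: "t \<in> \<phi> a" using ne by blast
  have "{t} \<subseteq> {1..c p}" using good_in[OF assms(3) a] t by blast
  then obtain b where b: "b \<in> over C p" "\<phi> b = {t}"
    using good_surj[OF assms(3), of "{t}"] by blast
  have "\<not> is_initial C p b" using initial_iff[OF assms, of b] b by simp
  moreover have "le_over C b a" using good_le[OF assms(3) b(1) a] b(2) t by simp
  ultimately have "b = a" using m b(1) by blast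
  then have "\<phi> a = {t}" using b by simp
  then show "a \<in> {a \<in> over C p. card (\<phi> a) = 1}" using a by simp
next
  fix a assume "a \<in> {a \<in> over C p. card (\<phi> a) = 1}"
  then have a: "a \<in> over C p" "card (\<phi> a) = 1" by simp_all
  then obtain t where t: "\<phi> a = {t}" using card_1_singletonE by blast
  show "a \<in> Q C p" unfolding Q_def
  proof (intro CollectI conjI ballI impI)
    show "a \<in> over C p" by fact
    show "\<not> is_initial C p a" using initial_iff[OF assms, of a] t by simp
    fix b assume b: "b \<in> over C p" "\<not> is_initial C p b" "le_over C b a"
    have 1: "\<phi> b \<subseteq> {t}" using good_le[OF assms(3) b(1) a(1)] b(3) t by simp
    have 2: "\<phi> b \<noteq> {}" using initial_iff[OF assms, of b] b(1,2) by blast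
    have "\<phi> b = {t}" using 1 2 by (simp add: subset_singleton_iff)
    then have "\<phi> b = \<phi> a" using t by simp
    then show "b = a" using good_inj[OF assms(3) b(1) a(1)] by blast
  qed
qed

lemma Q_card: assumes "model C c" "p \<in> Obj C"
  shows "card (Q C p) = c p" "finite (Q C p)"
proof -
  obtain \<phi> where g: "good C c p \<phi>" using good_ex[OF assms] by blast
  have injo: "inj_on \<phi> (over C p)" using g unfolding good_def bij_betw_def by blast
  have Qsub: "Q C p \<subseteq> over C p" unfolding Q_def by blast
  have inj: "inj_on \<phi> (Q C p)" using inj_on_subset[OF injo Qsub] .
  have img: "\<phi> ` Q C p = (\<lambda>t. {t}) ` {1..c p}"
  proof (intro set_eqI iffI)
    fix S assume "S \<in> \<phi> ` Q C p"
    then obtain a where a0: "a \<in> Q C p" "S = \<phi> a" by blast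
    then have a: "a \<in> over C p" "card (\<phi> a) = 1" "S = \<phi> a" using Q_char[OF assms g] by simp_all
    then obtain t where t: "\<phi> a = {t}" using card_1_singletonE by blast
    have "\<phi> a \<subseteq> {1..c p}" using good_in[OF g a(1)] .
    then have "t \<in> {1..c p}" using t by blast
    then show "S \<in> (\<lambda>t. {t}) ` {1..c p}" using a(3) t by blast
  next
    fix S assume "S \<in> (\<lambda>t. {t}) ` {1..c p}"
    then obtain t where t: "t \<in> {1..c p}" "S = {t}" by blast
    then have "{t} \<subseteq> {1..c p}" by blast
    then obtain a where a: "a \<in> over C p" "\<phi> a = {t}" using good_surj[OF g, of "{t}"] by blast
    then have "a \<in> Q C p" unfolding Q_char[OF assms g] by simp
    then show "S \<in> \<phi> ` Q C p" using a(2) t(2) by blast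
  qed
  have c1: "card (Q C p) = card ((\<lambda>t. {t}) ` {1..c p})"
    using card_image[OF inj] img by simp
  have "inj_on (\<lambda>t. {t}) {1..c p}" unfolding inj_on_def by blast
  then have c2: "card ((\<lambda>t::nat. {t}) ` {1..c p}) = c p" by (simp add: card_image)
  show "card (Q C p) = c p" using c1 c2 by simp
  have "finite (\<phi> ` Q C p)" unfolding img by simp
  then show "finite (Q C p)" using finite_imageD[OF _ inj] by blast
qed

lemma codim: assumes "model C c" "p \<in> Obj C" "good C c p \<phi>" "a \<in> over C p"
  shows "card (\<phi> a) = c (Dom C a)"
proof -
  define x where "x = Dom C a"
  have cat: "category C" using cat[OF assms(1)] .
  have aA: "a \<in> Arr C" "Cod C a = p" using assms(4) unfolding over_def by auto
  have x: "x \<in> Obj C" using dom_obj[OF assms(1) aA(1)] x_def by simp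
  define D where "D = {b \<in> over C p. le_over C b a}"
  have "bij_betw (Comp C a) (over C x) D" unfolding bij_betw_def
  proof
    show "inj_on (Comp C a) (over C x)"
    proof (rule inj_onI)
      fix e e' assume e: "e \<in> over C x" "e' \<in> over C x" "Comp C a e = Comp C a e'"
      have eA: "e \<in> Arr C" "Cod C e = Dom C a" "e' \<in> Arr C" "Cod C e' = Dom C a"
        using e unfolding over_def x_def by auto
      have c1: "Comp C a e \<in> over C p" "Dom C (Comp C a e) = Dom C e"
        using over_comp[OF assms(1,4) eA(1,2)] by auto
      have c2: "Dom C (Comp C a e') = Dom C e'"
        using over_comp[OF assms(1,4) eA(3,4)] by auto
      have "e \<in> over_hom C (Comp C a e) a" "e' \<in> over_hom C (Comp C a e) a"
        using eA c1 c2 e(3) unfolding over_hom_def by auto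
      then show "e = e'" using uniq[OF assms(1,2) c1(1) assms(4)] by blast
    qed
    show "Comp C a ` over C x = D"
    proof (intro set_eqI iffI)
      fix b assume "b \<in> Comp C a ` over C x"
      then obtain e where e: "e \<in> over C x" "b = Comp C a e" by auto
      have eA: "e \<in> Arr C" "Cod C e = Dom C a" using e unfolding over_def x_def by auto
      have c1: "Comp C a e \<in> over C p" "Dom C (Comp C a e) = Dom C e"
        using over_comp[OF assms(1,4) eA(1,2)] by auto
      have "e \<in> over_hom C b a" using eA c1 e unfolding over_hom_def by auto
      then show "b \<in> D" using c1 e unfolding D_def le_over_def by auto
    next
      fix b assume "b \<in> D"
      then have "b \<in> over C p" "le_over C b a" unfolding D_def by simp_all
      then obtain e where "b \<in> over C p" "e \<in> over_hom C b a" unfolding le_over_def by blast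
      then have "e \<in> over C x" "b = Comp C a e" unfolding over_hom_def over_def x_def by auto
      then show "b \<in> Comp C a ` over C x" by auto
    qed
  qed
  then have 1: "card (over C x) = card D" by (rule bij_betw_same_card)
  obtain \<psi> where "good C c x \<psi>" using good_ex[OF assms(1) x] by auto
  then have "bij_betw \<psi> (over C x) (Pow {1..c x})" unfolding good_def by auto
  then have "card (over C x) = card (Pow {1..c x})" by (rule bij_betw_same_card)
  then have 2: "card (over C x) = 2 ^ c x" by (simp add: card_Pow)
  have fa: "\<phi> a \<subseteq> {1..c p}" using good_in[OF assms(3,4)] .
  have "bij_betw \<phi> D (Pow (\<phi> a))" unfolding bij_betw_def
  proof
    show "inj_on \<phi> D" using good_inj[OF assms(3)] unfolding D_def inj_on_def by auto
    show "\<phi> ` D = Pow (\<phi> a)"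
    proof (intro set_eqI iffI)
      fix S assume "S \<in> \<phi> ` D"
      then obtain b where b: "b \<in> D" "S = \<phi> b" by blast
      then have "b \<in> over C p" "le_over C b a" unfolding D_def by simp_all
      then show "S \<in> Pow (\<phi> a)" using good_le[OF assms(3) _ assms(4)] b(2) by simp
    next
      fix S assume "S \<in> Pow (\<phi> a)"
      then have "S \<subseteq> {1..c p}" using fa by auto
      then obtain b where b: "b \<in> over C p" "\<phi> b = S" using good_surj[OF assms(3)] by metis
      then have "le_over C b a" using good_le[OF assms(3) b(1) assms(4)] \<open>S \<in> Pow (\<phi> a)\<close> by auto
      then show "S \<in> \<phi> ` D" using b unfolding D_def by auto
    qed
  qed
  moreover have "finite (\<phi> a)" using fa finite_subset by blast
  ultimately have 3: "card D = 2 ^ card (\<phi> a)" using bij_betw_same_card card_Pow by metis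
  from 1 2 3 have "(2::nat) ^ c x = 2 ^ card (\<phi> a)" by simp
  then show ?thesis unfolding x_def by simp
qed

lemma base_eq: assumes "model C c" "e \<in> Arr C"
  shows "base C (Dom C e) = base C (Cod C e)"
proof -
  have cat: "category C" using cat[OF assms(1)] .
  define x where "x = Dom C e"
  define y where "y = Cod C e"
  have xy: "x \<in> Obj C" "y \<in> Obj C" using dom_obj[OF assms(1,2)] x_def y_def by simp_all
  obtain \<phi>x where gx: "good C c x \<phi>x" using good_ex[OF assms(1) xy(1)] by auto
  obtain \<phi>y where gy: "good C c y \<phi>y" using good_ex[OF assms(1) xy(2)] by auto
  define ix where "ix = init_arr C x"
  define iy where "iy = init_arr C y"
  have ix: "ix \<in> over C x" "\<phi>x ix = {}" using init_arr[OF assms(1) xy(1) gx] ix_def by auto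
  have iy: "iy \<in> over C y" "\<phi>y iy = {}" using init_arr[OF assms(1) xy(2) gy] iy_def by auto
  define X where "X = Dom C ix"
  have ixA: "ix \<in> Arr C" "Cod C ix = x" using ix unfolding over_def by auto
  have X: "X \<in> Obj C" using dom_obj[OF assms(1) ixA(1)] X_def by simp
  have eo: "e \<in> over C y" using assms(2) unfolding over_def y_def by auto
  have c1: "Comp C e ix \<in> over C y" "Dom C (Comp C e ix) = X"
    using over_comp[OF assms(1) eo ixA(1)] ixA(2) X_def x_def by auto
  have "le_over C iy (Comp C e ix)" using good_le[OF gy iy(1) c1(1)] iy by auto
  then obtain d where d: "d \<in> over_hom C iy (Comp C e ix)" unfolding le_over_def by auto
  then have dX: "d \<in> over C X" "Dom C d = Dom C iy" using c1 unfolding over_hom_def over_def by auto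
  have cX: "c X = 0" using codim[OF assms(1) xy(1) gx ix(1)] ix(2) X_def by simp
  obtain \<phi>X where "good C c X \<phi>X" using good_ex[OF assms(1) X] by auto
  then have "bij_betw \<phi>X (over C X) (Pow {1..c X})" unfolding good_def by auto
  then have "card (over C X) = 1" using bij_betw_same_card cX by fastforce
  then obtain u where u: "over C X = {u}" using card_1_singletonE by blast
  have "Id C X \<in> over C X" using cat X unfolding category_def over_def by simp
  then have "d = Id C X" using dX u by auto
  moreover have "Dom C (Id C X) = X" using cat X unfolding category_def by blast
  ultimately have "Dom C iy = X" using dX by simp
  then show ?thesis unfolding base_def x_def y_def iy_def ix_def X_def by simp
qed

theorem mainTheorem2:
  fixes P0 :: "('o0, 'a0) cat" and P1 :: "('o1, 'a1) cat" and P2 :: "('o2, 'a2) cat"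
    and c0 :: "'o0 \<Rightarrow> nat" and c1 :: "'o1 \<Rightarrow> nat" and c2 :: "'o2 \<Rightarrow> nat"
    and F :: "'o0 \<Rightarrow> 'o1" and A :: "'a0 \<Rightarrow> 'a1"
    and G :: "'o1 \<Rightarrow> 'o2" and B :: "'a1 \<Rightarrow> 'a2"
    and p :: 'o0
  assumes f: "model_morphism P0 c0 P1 c1 F A"
    and g: "model_morphism P1 c1 P2 c2 G B"
    and p: "p \<in> Obj P0"
  shows "\<exists>h. bij_betw h (Q_mor P0 P1 F p <+> Q_mor P1 P2 G (F p)) (Q_mor P0 P2 (G \<circ> F) p)
           \<and> (\<forall>b\<in>Q_mor P1 P2 G (F p).
                 h (Inr b) = Comp P2 (B (init_arr P1 (F (base P0 p)))) b)
           \<and> (\<forall>a\<in>Q_mor P0 P1 F p.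
                 le_over P2 (h (Inl a)) (B a) \<and>
                 \<not> le_over P2 (h (Inl a)) (B (init_arr P1 (F (base P0 p)))))"
proof -
  have m0: "model P0 c0" and fF: "is_functor P0 P1 F A" using f unfolding model_morphism_def by blast+
  have m1: "model P1 c1" and m2: "model P2 c2" and gF: "is_functor P1 P2 G B"
    and injB: "inj_on B (Arr P1)" using g unfolding model_morphism_def by blast+
  obtain k :: int where k: "\<And>q. q \<in> Obj P1 \<Longrightarrow> int (c2 (G q)) = int (c1 q) + k"
    using g unfolding model_morphism_def by blast
  obtain \<phi>0 where g0: "good P0 c0 p \<phi>0" using good_ex[OF m0 p] by blast
  define i0 where "i0 = init_arr P0 p"
  have i0: "i0 \<in> Arr P0" "Cod P0 i0 = p" using init_arr(1)[OF m0 p g0] unfolding i0_def over_def by simp_all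
  define p0 where "p0 = base P0 p"
  have p0: "p0 = Dom P0 i0" unfolding p0_def base_def i0_def ..
  have p0O: "p0 \<in> Obj P0" using dom_obj[OF m0 i0(1)] p0 by simp
  define x where "x = F p0"
  have xO: "x \<in> Obj P1" using functor_obj[OF fF p0O] x_def by simp
  define e where "e = A i0"
  have e: "e \<in> Arr P1" "Dom P1 e = x" "Cod P1 e = F p"
    using functorD[OF fF i0(1)] i0(2) p0 x_def e_def by simp_all
  have baseFp: "base P1 (F p) = base P1 x" using base_eq[OF m1 e(1)] e by simp
  obtain \<psi> where gx: "good P1 c1 x \<psi>" using good_ex[OF m1 xO] by blast
  define j where "j = init_arr P1 x"
  have jo: "j \<in> over P1 x" "\<psi> j = {}" using init_arr[OF m1 xO gx] j_def by simp_all
  have j: "j \<in> Arr P1" "Cod P1 j = x" using jo(1) unfolding over_def by simp_all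
  define r where "r = base P1 x"
  have r: "r = Dom P1 j" unfolding r_def base_def j_def ..
  have rO: "r \<in> Obj P1" using dom_obj[OF m1 j(1)] r by simp
  have cr: "c1 r = 0" using codim[OF m1 xO gx jo(1)] jo(2) r by simp
  define z where "z = G x"
  have zO: "z \<in> Obj P2" using functor_obj[OF gF xO] z_def by simp
  have GrO: "G r \<in> Obj P2" using functor_obj[OF gF rO] .
  obtain \<phi> where gz: "good P2 c2 z \<phi>" using good_ex[OF m2 zO] by blast
  obtain \<chi> where gr: "good P2 c2 (G r) \<chi>" using good_ex[OF m2 GrO] by blast
  define Bj where "Bj = B j"
  have Bj: "Bj \<in> Arr P2" "Dom P2 Bj = G r" "Cod P2 Bj = z"
    using functorD[OF gF j(1)] j(2) r Bj_def z_def by simp_all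
  have Bjo: "Bj \<in> over P2 z" using Bj unfolding over_def by simp
  define K where "K = c2 (G r)"
  have Kk: "int K = k" using k[OF rO] cr K_def by simp
  define Sj where "Sj = \<phi> Bj"
  have cSj: "card Sj = K" using codim[OF m2 zO gz Bjo] Bj(2) Sj_def K_def by simp
  have finSj: "finite Sj" using good_in[OF gz Bjo] Sj_def finite_subset by fastforce
  have Q1: "Q_mor P0 P1 F p = Q P1 x" unfolding Q_mor_def x_def p0_def ..
  have Q2: "Q_mor P1 P2 G (F p) = Q P2 (G r)" unfolding Q_mor_def baseFp r_def ..
  have Q3: "Q_mor P0 P2 (G \<circ> F) p = Q P2 z" unfolding Q_mor_def z_def x_def p0_def by simp
  have jj: "init_arr P1 (F (base P0 p)) = j" unfolding j_def x_def p0_def ..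
  have Ainfo: "B a \<in> over P2 z \<and> Sj \<subseteq> \<phi> (B a) \<and> card (\<phi> (B a)) = Suc K"
    if aQ: "a \<in> Q P1 x" for a
  proof -
    have ao: "a \<in> over P1 x" "card (\<psi> a) = 1" using aQ unfolding Q_char[OF m1 xO gx] by simp_all
    have a: "a \<in> Arr P1" "Cod P1 a = x" using ao(1) unfolding over_def by simp_all
    have ca: "c1 (Dom P1 a) = 1" using codim[OF m1 xO gx ao(1)] ao(2) by simp
    have daO: "Dom P1 a \<in> Obj P1" using dom_obj[OF m1 a(1)] by simp
    have Ba: "B a \<in> Arr P2" "Dom P2 (B a) = G (Dom P1 a)" "Cod P2 (B a) = z"
      using functorD[OF gF a(1)] a(2) z_def by simp_all
    have Bao: "B a \<in> over P2 z" using Ba unfolding over_def by simp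
    have "card (\<phi> (B a)) = c2 (G (Dom P1 a))" using codim[OF m2 zO gz Bao] Ba(2) by simp
    moreover have "int (c2 (G (Dom P1 a))) = 1 + int K" using k[OF daO] ca Kk by simp
    ultimately have cBa: "card (\<phi> (B a)) = Suc K" by simp
    have "le_over P1 j a" using good_le[OF gx jo(1) ao(1)] jo(2) by simp
    then obtain d where d: "d \<in> over_hom P1 j a" unfolding le_over_def by blast
    have d1: "d \<in> Arr P1" "Dom P1 d = Dom P1 j" "Cod P1 d = Dom P1 a" "Comp P1 a d = j"
      using d unfolding over_hom_def by simp_all
    have "B d \<in> over_hom P2 Bj (B a)"
      unfolding over_hom_def using functorD[OF gF d1(1)] d1 Ba Bj Bj_def r
        functor_comp[OF gF d1(1) a(1) d1(3)] by simp
    then have "le_over P2 Bj (B a)" unfolding le_over_def by blast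
    then have "Sj \<subseteq> \<phi> (B a)" using good_le[OF gz Bjo Bao] Sj_def by simp
    then show ?thesis using Bao cBa by simp
  qed
  define t where "t a = the_elem (\<phi> (B a) - Sj)" for a
  have tinfo: "t a \<in> \<phi> (B a) \<and> t a \<notin> Sj \<and> t a \<in> {1..c2 z} \<and> \<phi> (B a) = insert (t a) Sj" if aQ: "a \<in> Q P1 x" for a
  proof -
    have I: "B a \<in> over P2 z" "Sj \<subseteq> \<phi> (B a)" "card (\<phi> (B a)) = Suc K" using Ainfo[OF aQ] by simp_all
    have "card (\<phi> (B a) - Sj) = 1" using I(2,3) cSj finSj by (simp add: card_Diff_subset)
    then obtain u where u: "\<phi> (B a) - Sj = {u}" using card_1_singletonE by blast
    then have "t a = u" unfolding t_def by simp
    then have tt: "t a \<in> \<phi> (B a)" "t a \<notin> Sj" using u by blast+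
    have "\<phi> (B a) = insert (t a) Sj" using u I(2) \<open>t a = u\<close> by blast
    moreover have "\<phi> (B a) \<subseteq> {1..c2 z}" using good_in[OF gz I(1)] .
    ultimately show ?thesis using tt by blast
  qed
  define w where "w a = inv_into (over P2 z) \<phi> {t a}" for a
  have winfo: "w a \<in> over P2 z \<and> \<phi> (w a) = {t a}" if aQ: "a \<in> Q P1 x" for a
  proof -
    have "{t a} \<in> \<phi> ` over P2 z" using gz tinfo[OF aQ] unfolding good_def bij_betw_def by simp
    then show ?thesis unfolding w_def by (simp add: inv_into_into f_inv_into_f)
  qed
  have binfo: "Comp P2 Bj b \<in> over P2 z \<and> Dom P2 (Comp P2 Bj b) = Dom P2 b \<and> card (\<phi> (Comp P2 Bj b)) = 1
      \<and> \<phi> (Comp P2 Bj b) \<subseteq> Sj \<and> b \<in> over_hom P2 (Comp P2 Bj b) Bj" if bQ: "b \<in> Q P2 (G r)" for b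
  proof -
    have bo: "b \<in> over P2 (G r)" "card (\<chi> b) = 1" using bQ unfolding Q_char[OF m2 GrO gr] by simp_all
    have b: "b \<in> Arr P2" "Cod P2 b = Dom P2 Bj" using bo(1) Bj(2) unfolding over_def by simp_all
    have c: "Comp P2 Bj b \<in> over P2 z" "Dom P2 (Comp P2 Bj b) = Dom P2 b"
      using over_comp[OF m2 Bjo b] by simp_all
    have "card (\<phi> (Comp P2 Bj b)) = c2 (Dom P2 b)" using codim[OF m2 zO gz c(1)] c(2) by simp
    also have "\<dots> = 1" using codim[OF m2 GrO gr bo(1)] bo(2) by simp
    finally have c1: "card (\<phi> (Comp P2 Bj b)) = 1" .
    have bh: "b \<in> over_hom P2 (Comp P2 Bj b) Bj" unfolding over_hom_def using b c by simp
    then have "le_over P2 (Comp P2 Bj b) Bj" unfolding le_over_def by blast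
    then have "\<phi> (Comp P2 Bj b) \<subseteq> Sj" using good_le[OF gz c(1) Bjo] Sj_def by simp
    then show ?thesis using c c1 bh by simp
  qed
  define h where "h s = (case s of Inl a \<Rightarrow> w a | Inr b \<Rightarrow> Comp P2 Bj b)" for s
  define D where "D = Q P1 x <+> Q P2 (G r)"
  have inj: "inj_on h D"
  proof (rule inj_onI)
    fix s1 s2 assume s: "s1 \<in> D" "s2 \<in> D" "h s1 = h s2"
    show "s1 = s2"
    proof (cases s1)
      case (Inl a)
      then have a: "a \<in> Q P1 x" using s(1) D_def by auto
      show ?thesis
      proof (cases s2)
        case (Inl a')
        then have a': "a' \<in> Q P1 x" using s(2) D_def by auto
        have "w a = w a'" using s(3) Inl \<open>s1 = Inl a\<close> h_def by simp
        then have "{t a} = {t a'}" using winfo[OF a] winfo[OF a'] by metis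
        then have tt: "t a = t a'" by simp
        have "\<phi> (B a) = insert (t a) Sj" using tinfo[OF a] by simp
        moreover have "\<phi> (B a') = insert (t a') Sj" using tinfo[OF a'] by simp
        ultimately have "\<phi> (B a) = \<phi> (B a')" using tt by simp
        then have "B a = B a'" using good_inj[OF gz] Ainfo[OF a] Ainfo[OF a'] by blast
        moreover have "a \<in> Arr P1" "a' \<in> Arr P1" using a a' unfolding Q_def over_def by simp_all
        ultimately have "a = a'" using injB unfolding inj_on_def by blast
        then show ?thesis using Inl \<open>s1 = Inl a\<close> by simp
      next
        case (Inr b)
        then have b: "b \<in> Q P2 (G r)" using s(2) D_def by auto
        have "w a = Comp P2 Bj b" using s(3) Inr \<open>s1 = Inl a\<close> h_def by simp
        then have "{t a} \<subseteq> Sj" using winfo[OF a] binfo[OF b] by metis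
        then show ?thesis using tinfo[OF a] by blast
      qed
    next
      case (Inr b)
      then have b: "b \<in> Q P2 (G r)" using s(1) D_def by auto
      show ?thesis
      proof (cases s2)
        case (Inl a)
        then have a: "a \<in> Q P1 x" using s(2) D_def by auto
        have "w a = Comp P2 Bj b" using s(3) Inl \<open>s1 = Inr b\<close> h_def by simp
        then have "{t a} \<subseteq> Sj" using winfo[OF a] binfo[OF b] by metis
        then show ?thesis using tinfo[OF a] by blast
      next
        case (Inr b')
        then have b': "b' \<in> Q P2 (G r)" using s(2) D_def by auto
        have eq: "Comp P2 Bj b = Comp P2 Bj b'" using s(3) Inr \<open>s1 = Inr b\<close> h_def by simp
        have "b' \<in> over_hom P2 (Comp P2 Bj b) Bj" using binfo[OF b'] eq by simp
        moreover have "b \<in> over_hom P2 (Comp P2 Bj b) Bj" using binfo[OF b] by simp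
        moreover have "Comp P2 Bj b \<in> over P2 z" using binfo[OF b] by simp
        ultimately have "b = b'" using uniq[OF m2 zO _ Bjo] by blast
        then show ?thesis using Inr \<open>s1 = Inr b\<close> by simp
      qed
    qed
  qed
  have sub: "h ` D \<subseteq> Q P2 z"
  proof
    fix y assume "y \<in> h ` D"
    then obtain s where s: "s \<in> D" "y = h s" by blast
    show "y \<in> Q P2 z"
    proof (cases s)
      case (Inl a)
      then have a: "a \<in> Q P1 x" using s(1) D_def by auto
      have "y = w a" using s(2) Inl h_def by simp
      then show ?thesis unfolding Q_char[OF m2 zO gz] using winfo[OF a] by simp
    next
      case (Inr b)
      then have b: "b \<in> Q P2 (G r)" using s(1) D_def by auto
      have "y = Comp P2 Bj b" using s(2) Inr h_def by simp
      then show ?thesis unfolding Q_char[OF m2 zO gz] using binfo[OF b] by simp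
    qed
  qed
  have cD: "card D = c1 x + K" unfolding D_def
    using Q_card[OF m1 xO] Q_card[OF m2 GrO] K_def by (simp add: card_Plus)
  have "int (c2 z) = int (c1 x) + int K" using k[OF xO] Kk z_def by simp
  then have cQ3: "card (Q P2 z) = c1 x + K" using Q_card(1)[OF m2 zO] by simp
  have "card (h ` D) = card (Q P2 z)" using card_image[OF inj] cD cQ3 by simp
  then have img: "h ` D = Q P2 z" using card_subset_eq[OF Q_card(2)[OF m2 zO] sub] by simp
  have bij: "bij_betw h D (Q P2 z)" unfolding bij_betw_def using inj img by simp
  show ?thesis
  proof (intro exI conjI ballI)
    show "bij_betw h (Q_mor P0 P1 F p <+> Q_mor P1 P2 G (F p)) (Q_mor P0 P2 (G \<circ> F) p)"
      unfolding Q1 Q2 Q3 using bij D_def by simp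
  next
    fix b assume "b \<in> Q_mor P1 P2 G (F p)"
    show "h (Inr b) = Comp P2 (B (init_arr P1 (F (base P0 p)))) b" unfolding jj h_def Bj_def by simp
  next
    fix a assume "a \<in> Q_mor P0 P1 F p"
    then have a: "a \<in> Q P1 x" using Q1 by simp
    have hw: "h (Inl a) = w a" unfolding h_def by simp
    have "le_over P2 (w a) (B a) \<longleftrightarrow> \<phi> (w a) \<subseteq> \<phi> (B a)"
      using good_le[OF gz] winfo[OF a] Ainfo[OF a] by blast
    then show "le_over P2 (h (Inl a)) (B a)" using hw winfo[OF a] tinfo[OF a] by simp
  next
    fix a assume "a \<in> Q_mor P0 P1 F p"
    then have a: "a \<in> Q P1 x" using Q1 by simp
    have hw: "h (Inl a) = w a" unfolding h_def by simp
    have "le_over P2 (w a) Bj \<longleftrightarrow> \<phi> (w a) \<subseteq> Sj"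
      using good_le[OF gz] winfo[OF a] Bjo Sj_def by blast
    then show "\<not> le_over P2 (h (Inl a)) (B (init_arr P1 (F (base P0 p))))"
      using hw winfo[OF a] tinfo[OF a] jj Bj_def by simp
  qed
qed

end
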